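(* For generic $a$ ($a\neq1$) and $k$, define for $n\ge0$ \[ \boldsymbol{\alpha}_n(a,k,q)=\frac{(-1)^na^nq^{n(3n-1)/2}(1-aq^{2n})(a;q)_n}{(1-a)(q;q)_n},\qquad \boldsymbol{\beta}_n(a,k,q)=(k;q)_n\sum_{j=0}^n\frac{(-1)^jk^jq^{\binom j2+nj}(k/a;q)_{n-j}}{(q;q)_j(q;q)_{n-j}}. \] Then $(\boldsymbol{\alpha}_n,\boldsymbol{\beta}_n)$ is a WP-Bailey pair relative to $a$ with parameter $k$.
   Context: Notation: $(x;q)_n=\prod_{i=0}^{n-1}(1-xq^i)$. A pair of sequences $(\boldsymbol{\alpha}_n(a,k,q),\boldsymbol{\beta}_n(a,k,q))_{n\ge0}$ is a WP-Bailey pair (relative to $a$, with parameter $k$) if $\boldsymbol{\alpha}_0=1$ and for all $n\ge0$ \[\boldsymbol{\beta}_n=\sum_{j=0}^n\frac{(k/a;q)_{n-j}(k;q)_{n+j}}{(q;q)_{n-j}(aq;q)_{n+j}}\boldsymbol{\alpha}_j.\] *)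

theory Defs
  imports Complex_Main
begin

definition qpoch :: "complex \<Rightarrow> complex \<Rightarrow> nat \<Rightarrow> complex" where
  "qpoch x q n = (\<Prod>i<n. 1 - x * q ^ i)"

definition WP_Bailey_pair ::
  "complex \<Rightarrow> complex \<Rightarrow> complex \<Rightarrow> (nat \<Rightarrow> complex) \<Rightarrow> (nat \<Rightarrow> complex) \<Rightarrow> bool" where
  "WP_Bailey_pair a k q \<alpha> \<beta> \<longleftrightarrow>
     \<alpha> 0 = 1 \<and>
     (\<forall>n. \<beta> n = (\<Sum>j\<le>n. qpoch (k / a) q (n - j) * qpoch k q (n + j)
                        / (qpoch q q (n - j) * qpoch (a * q) q (n + j)) * \<alpha> j))"

definition alpha17 :: "complex \<Rightarrow> complex \<Rightarrow> complex \<Rightarrow> nat \<Rightarrow> complex" where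
  "alpha17 a k q n =
     (-1) ^ n * a ^ n * q ^ (n * (3 * n - 1) div 2) * (1 - a * q ^ (2 * n)) * qpoch a q n
       / ((1 - a) * qpoch q q n)"

definition beta17 :: "complex \<Rightarrow> complex \<Rightarrow> complex \<Rightarrow> nat \<Rightarrow> complex" where
  "beta17 a k q n =
     qpoch k q n * (\<Sum>j\<le>n. (-1) ^ j * k ^ j * q ^ ((j choose 2) + n * j) * qpoch (k / a) q (n - j)
                            / (qpoch q q j * qpoch q q (n - j)))"

end

theory Submission
  imports Defs "HOL-Computational_Algebra.Polynomial"
begin


lemma qp_0[simp]: "qpoch x q 0 = 1" by (simp add: qpoch_def)
lemma qp_Suc: "qpoch x q (Suc n) = qpoch x q n * (1 - x*q^n)" by (simp add: qpoch_def)
lemma qp_shift: "qpoch x q (Suc n) = (1 - x) * qpoch (x*q) q n"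
  unfolding qpoch_def prod.lessThan_Suc_shift by (simp add: mult.assoc)
lemma qp_one: "qpoch 1 q (Suc n) = 0" by (simp add: qp_shift)

definition polyfun :: "(complex \<Rightarrow> complex) \<Rightarrow> bool" where
  "polyfun f \<longleftrightarrow> (\<exists>p. \<forall>x. f x = poly p x)"

lemma pf_const: "polyfun (\<lambda>x. c)"
  unfolding polyfun_def by (rule exI[of _ "[:c:]"]) simp
lemma pf_id: "polyfun (\<lambda>x. x)"
  unfolding polyfun_def by (rule exI[of _ "[:0,1:]"]) simp
lemma pf_add: "polyfun f \<Longrightarrow> polyfun g \<Longrightarrow> polyfun (\<lambda>x. f x + g x)"
  unfolding polyfun_def by (metis poly_add)
lemma pf_diff: "polyfun f \<Longrightarrow> polyfun g \<Longrightarrow> polyfun (\<lambda>x. f x - g x)"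
  unfolding polyfun_def by (metis poly_diff)
lemma pf_mult: "polyfun f \<Longrightarrow> polyfun g \<Longrightarrow> polyfun (\<lambda>x. f x * g x)"
  unfolding polyfun_def by (metis poly_mult)
lemma pf_div: "polyfun f \<Longrightarrow> polyfun (\<lambda>x. f x / c)"
  unfolding polyfun_def by (metis poly_smult divide_inverse mult.commute)
lemma pf_pow: "polyfun f \<Longrightarrow> polyfun (\<lambda>x. f x ^ n)"
  by (induction n) (simp_all add: pf_const pf_mult)
lemma pf_sum: "(\<And>i. i \<in> A \<Longrightarrow> polyfun (f i)) \<Longrightarrow> polyfun (\<lambda>x. \<Sum>i\<in>A. f i x)"
proof -
  assume "\<And>i. i \<in> A \<Longrightarrow> polyfun (f i)"
  then have "\<forall>i\<in>A. \<exists>p. \<forall>x. f i x = poly p x" unfolding polyfun_def by blast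
  then obtain P where "\<forall>i\<in>A. \<forall>x. f i x = poly (P i) x" by metis
  then show ?thesis unfolding polyfun_def
    by (intro exI[of _ "\<Sum>i\<in>A. P i"]) (simp add: poly_sum)
qed
lemma pf_prod: "(\<And>i. i \<in> A \<Longrightarrow> polyfun (f i)) \<Longrightarrow> polyfun (\<lambda>x. \<Prod>i\<in>A. f i x)"
proof -
  assume "\<And>i. i \<in> A \<Longrightarrow> polyfun (f i)"
  then have "\<forall>i\<in>A. \<exists>p. \<forall>x. f i x = poly p x" unfolding polyfun_def by blast
  then obtain P where "\<forall>i\<in>A. \<forall>x. f i x = poly (P i) x" by metis
  then show ?thesis unfolding polyfun_def
    by (intro exI[of _ "\<Prod>i\<in>A. P i"]) (simp add: poly_prod)
qed
lemma pf_qp: "polyfun (\<lambda>k. qpoch (k * c) q n)"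
  unfolding qpoch_def by (intro pf_prod pf_diff pf_const pf_mult pf_id)
lemma pf_qp1: "polyfun (\<lambda>k. qpoch k q n)"
  using pf_qp[of 1] by simp
lemma pf_qp2: "polyfun (\<lambda>k. qpoch (k / a) q n)"
  using pf_qp[of "inverse a"] by (simp add: divide_inverse)


lemma alg: fixes A B Q1 Q2 q x y a k u v :: complex
  assumes "Q1\<noteq>0" "Q2\<noteq>0" "u\<noteq>0" "v\<noteq>0" "a\<noteq>0" and u: "u = 1-q*x" and v: "v=1-a*q*y"
  shows "(1-k) * ((A*(1-k*q/a*x)) * (B*(1-k*q*y)) / ((Q1*u)*(Q2*v))) = (1 - k*(q^2*x*y)) * ((1-k/a)*A * ((1-k)*B) / ((Q1*u)*(Q2*v))) + (1-k)*(k/a)*(A*B/(Q1*Q2))"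
proof -
  have L: "(1-k) * ((A*(1-k*q/a*x)) * (B*(1-k*q*y)) / ((Q1*u)*(Q2*v))) = ((1-k)*A*B*(a-k*q*x)*(1-k*q*y)) / (a*Q1*Q2*u*v)"
    using assms(1-5) by (simp add: field_simps)
  have R: "(1 - k*(q^2*x*y)) * ((1-k/a)*A * ((1-k)*B) / ((Q1*u)*(Q2*v))) + (1-k)*(k/a)*(A*B/(Q1*Q2)) = ((1 - k*(q^2*x*y))*(a-k)*A*(1-k)*B + (1-k)*k*A*B*u*v) / (a*Q1*Q2*u*v)"
    using assms(1-5) by (simp add: field_simps)
  have N: "(1-k)*A*B*(a-k*q*x)*(1-k*q*y) = (1 - k*(q^2*x*y))*(a-k)*A*(1-k)*B + (1-k)*k*A*B*u*v"
    unfolding u v by (simp add: algebra_simps power2_eq_square)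
  show ?thesis unfolding L R N ..
qed


definition K :: "complex \<Rightarrow> complex \<Rightarrow> nat \<Rightarrow> nat \<Rightarrow> complex \<Rightarrow> complex" where
  "K a q n j k = qpoch (k / a) q (n - j) * qpoch k q (n + j) / (qpoch q q (n - j) * qpoch (a * q) q (n + j))"

lemma K_rec:
  assumes nq: "\<And>m. qpoch q q m \<noteq> 0" and naq: "\<And>m. qpoch (a * q) q m \<noteq> 0" and "a \<noteq> 0" and "j \<le> m"
  shows "(1-k) * K a q (Suc m) j (k*q) = (1 - k*q^(2*Suc m)) * K a q (Suc m) j k + (1-k)*(k/a) * K a q m j (k*q)"
proof -
  obtain d where md: "m = j + d" using assms(4) by (metis le_iff_add)
  have e1: "Suc m - j = Suc d" "Suc m + j = Suc (m + j)" "m - j = d" using md by auto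
  define A where "A = qpoch (k*q/a) q d"
  define B where "B = qpoch (k*q) q (m+j)"
  define Q1 where "Q1 = qpoch q q d"
  define Q2 where "Q2 = qpoch (a*q) q (m+j)"
  have h1: "qpoch (k/a) q (Suc d) = (1-k/a)*A" unfolding A_def qp_shift by simp
  have h2: "qpoch k q (Suc (m+j)) = (1-k)*B" unfolding B_def qp_shift by simp
  have h3: "qpoch (k*q/a) q (Suc d) = A*(1-k*q/a*q^d)" unfolding A_def qp_Suc by simp
  have h4: "qpoch (k*q) q (Suc (m+j)) = B*(1-k*q*q^(m+j))" unfolding B_def qp_Suc by simp
  have h5: "qpoch q q (Suc d) = Q1*(1-q*q^d)" unfolding Q1_def qp_Suc by simp
  have h6: "qpoch (a*q) q (Suc (m+j)) = Q2*(1-a*q*q^(m+j))" unfolding Q2_def qp_Suc by simp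
  have nz1: "Q1 \<noteq> 0" "Q2 \<noteq> 0" "1-q*q^d \<noteq> 0" "1-a*q*q^(m+j) \<noteq> 0"
    using nq[of d] naq[of "m+j"] nq[of "Suc d"] naq[of "Suc (m+j)"] h5 h6 unfolding Q1_def Q2_def by auto
  have p: "q^(2*Suc m) = q^2 * q^d * q^(m+j)"
  proof -
    have e: "2*Suc m = 2 + d + (m+j)" using md by simp
    show ?thesis unfolding e power_add by simp
  qed
  show ?thesis unfolding K_def e1 h1 h2 h3 h4 h5 h6 p
    unfolding A_def[symmetric] B_def[symmetric] Q1_def[symmetric] Q2_def[symmetric]
    by (rule alg[OF nz1(1) nz1(2) nz1(3) nz1(4) \<open>a \<noteq> 0\<close> refl refl])
qed

lemma K_top:
  assumes naq: "\<And>m. qpoch (a * q) q m \<noteq> 0"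
  shows "(1-k) * K a q n n (k*q) = (1 - k*q^(2*n)) * K a q n n k"
proof -
  have "(1-k) * qpoch (k*q) q (2*n) = qpoch k q (2*n) * (1 - k*q^(2*n))"
    using qp_shift[of k q "2*n", symmetric] qp_Suc[of k q "2*n"] by simp
  then show ?thesis unfolding K_def using naq[of "2*n"] by (simp add: mult_2[symmetric] field_simps)
qed

definition T :: "complex \<Rightarrow> complex \<Rightarrow> nat \<Rightarrow> nat \<Rightarrow> complex \<Rightarrow> complex" where
  "T a q n j k = (-1) ^ j * k ^ j * q ^ ((j choose 2) + n * j) * qpoch (k / a) q (n - j)
                            / (qpoch q q j * qpoch q q (n - j))"
definition G :: "complex \<Rightarrow> complex \<Rightarrow> nat \<Rightarrow> nat \<Rightarrow> complex \<Rightarrow> complex" where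
  "G a q n j k = (-1) ^ j * k ^ j * q ^ ((j choose 2) + n * j) * (1 - q^j) * qpoch (k*q / a) q (n - j)
                            / (qpoch q q j * qpoch q q (n - j))"

lemma TG_rec:
  assumes nq: "\<And>m. qpoch q q m \<noteq> 0" and "a \<noteq> 0" and "j \<le> m"
  shows "(1-k*q^Suc m) * T a q (Suc m) j (k*q) - (1-k*q^(2*Suc m)) * T a q (Suc m) j k - (k/a) * T a q m j (k*q)
     = G a q (Suc m) (Suc j) k - G a q (Suc m) j k"
proof -
  obtain d where md: "m = j + d" using assms(3) by (metis le_iff_add)
  define n where "n = Suc m"
  define E where "E = (-1) ^ j * k ^ j * q ^ ((j choose 2) + n * j)"
  define x where "x = q^j"
  define y where "y = q^d"
  define u where "u = 1 - q*y"
  define w where "w = 1 - q*x"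
  define A where "A = qpoch (k*q/a) q d"
  define Qj where "Qj = qpoch q q j"
  define Qd where "Qd = qpoch q q d"
  define D where "D = a*Qj*Qd*u*w"
  have e1: "n - j = Suc d" "m - j = d" "n - Suc j = d" using md n_def by auto
  have qn: "q^n = q*x*y" unfolding x_def y_def n_def md by (simp add: power_add)
  have q2n: "q^(2*n) = q^2*x^2*y^2"
  proof -
    have "q^(2*n) = (q^n)^2" by (simp add: power_mult[symmetric] mult.commute)
    then show ?thesis unfolding qn by (simp add: power_mult_distrib)
  qed
  have nz: "a \<noteq> 0" "Qj \<noteq> 0" "Qd \<noteq> 0" "u \<noteq> 0" "w \<noteq> 0"
    using nq[of j] nq[of d] nq[of "Suc j"] nq[of "Suc d"] \<open>a\<noteq>0\<close>
    unfolding Qj_def Qd_def u_def w_def x_def y_def qp_Suc by auto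
  have hA1: "qpoch (k/a) q (Suc d) = (1-k/a)*A" unfolding A_def qp_shift by simp
  have hA2: "qpoch (k*q/a) q (Suc d) = A*(1-k*q/a*y)" unfolding A_def qp_Suc y_def by simp
  have hQd: "qpoch q q (Suc d) = Qd*u" unfolding Qd_def qp_Suc u_def y_def by simp
  have hQj: "qpoch q q (Suc j) = Qj*w" unfolding Qj_def qp_Suc w_def x_def by simp
  have t1: "T a q n j (k*q) = E*x*A*(a-k*q*y)*w / D"
  proof -
    have "T a q n j (k*q) = E*x*(A*(1-k*q/a*y))/(Qj*(Qd*u))"
      unfolding T_def e1 hA2 hQd E_def x_def Qj_def[symmetric] by (simp add: power_mult_distrib)
    also have "... = E*x*A*(a-k*q*y)*w / D" unfolding D_def using nz by (simp add: field_simps)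
    finally show ?thesis .
  qed
  have t2: "T a q n j k = E*(a-k)*A*w / D"
  proof -
    have "T a q n j k = E*((1-k/a)*A)/(Qj*(Qd*u))"
      unfolding T_def e1 hA1 hQd E_def Qj_def[symmetric] by simp
    also have "... = E*(a-k)*A*w / D" unfolding D_def using nz by (simp add: field_simps)
    finally show ?thesis .
  qed
  have t3: "(k/a) * T a q m j (k*q) = E*k*A*u*w / D"
  proof -
    have "q^j * q^((j choose 2) + m*j) = q^((j choose 2) + n*j)"
      unfolding n_def by (simp add: power_add[symmetric] algebra_simps)
    then have "T a q m j (k*q) = E*A/(Qj*Qd)"
      unfolding T_def e1 E_def A_def[symmetric] Qj_def[symmetric] Qd_def[symmetric]
      by (simp add: power_mult_distrib algebra_simps)
    also have "(k/a) * ... = E*k*A*u*w / D" unfolding D_def using nz by (simp add: field_simps)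
    finally show ?thesis by simp
  qed
  have g1: "G a q n (Suc j) k = -(E*k*x*(q*x*y)*A*a*u*w) / D"
  proof -
    have ch: "(Suc j choose 2) = (j choose 2) + j" by (simp add: numeral_2_eq_2)
    have "q ^ ((Suc j choose 2) + n * Suc j) = q ^ ((j choose 2) + n * j) * x * (q*x*y)"
    proof -
      have "(Suc j choose 2) + n * Suc j = ((j choose 2) + n * j) + j + n" by (simp add: ch)
      then have "q ^ ((Suc j choose 2) + n * Suc j) = q ^ ((j choose 2) + n * j) * q^j * q^n"
        by (simp only: power_add)
      then show ?thesis unfolding qn x_def .
    qed
    then have "G a q n (Suc j) k = -(E*k*x*(q*x*y)*A)/(Qj*Qd)"
      unfolding G_def e1 E_def A_def[symmetric] hQj Qd_def[symmetric] using nz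
      by (simp add: field_simps w_def x_def)
    also have "... = -(E*k*x*(q*x*y)*A*a*u*w) / D" unfolding D_def using nz by (simp add: field_simps)
    finally show ?thesis .
  qed
  have g2: "G a q n j k = E*(1-x)*A*(a-k*q*y)*w / D"
  proof -
    have "G a q n j k = E*(1-x)*(A*(1-k*q/a*y))/(Qj*(Qd*u))"
      unfolding G_def e1 hA2 hQd E_def x_def Qj_def[symmetric] by simp
    also have "... = E*(1-x)*A*(a-k*q*y)*w / D" unfolding D_def using nz by (simp add: field_simps)
    finally show ?thesis .
  qed
  have N: "(1-k*(q*x*y))*(E*x*A*(a-k*q*y)*w) - (1-k*(q^2*x^2*y^2))*(E*(a-k)*A*w) - E*k*A*u*w
      = -(E*k*x*(q*x*y)*A*a*u*w) - E*(1-x)*A*(a-k*q*y)*w"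
    unfolding u_def w_def by (simp add: algebra_simps power2_eq_square)
  have "(1-k*q^n) * T a q n j (k*q) - (1-k*q^(2*n)) * T a q n j k - (k/a) * T a q m j (k*q)
     = G a q n (Suc j) k - G a q n j k"
    unfolding t1 t2 t3 g1 g2 qn q2n
    by (simp only: times_divide_eq_right diff_divide_distrib[symmetric] N)
  then show ?thesis unfolding n_def .
qed



lemma T_top:
  assumes nq: "\<And>m. qpoch q q m \<noteq> 0"
  shows "(1-k*q^n) * T a q n n (k*q) - (1-k*q^(2*n)) * T a q n n k = - G a q n n k"
proof -
  define E where "E = (-1) ^ n * k ^ n * q ^ ((n choose 2) + n * n)"
  have q2: "q^(2*n) = q^n*q^n" by (simp add: mult_2 power_add)
  have t1: "T a q n n (k*q) = E*q^n/qpoch q q n" unfolding T_def E_def by (simp add: power_mult_distrib)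
  have t2: "T a q n n k = E/qpoch q q n" unfolding T_def E_def by simp
  have g: "G a q n n k = E*(1-q^n)/qpoch q q n" unfolding G_def E_def by simp
  have "(1-k*q^n) * (E*q^n) - (1-k*(q^n*q^n)) * E = - (E*(1-q^n))" by (simp add: algebra_simps)
  then show ?thesis unfolding t1 t2 g q2
    by (simp only: times_divide_eq_right diff_divide_distrib[symmetric] divide_minus_left[symmetric])
qed

lemma G_0: "G a q n 0 k = 0" by (simp add: G_def)

lemma S_rec:
  assumes nq: "\<And>m. qpoch q q m \<noteq> 0" and "a \<noteq> 0"
  shows "(1-k*q^Suc m) * (\<Sum>j\<le>Suc m. T a q (Suc m) j (k*q)) - (1-k*q^(2*Suc m)) * (\<Sum>j\<le>Suc m. T a q (Suc m) j k)
     - (k/a) * (\<Sum>j\<le>m. T a q m j (k*q)) = 0"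
proof -
  let ?n = "Suc m"
  have "(1-k*q^?n) * (\<Sum>j\<le>?n. T a q ?n j (k*q)) - (1-k*q^(2*?n)) * (\<Sum>j\<le>?n. T a q ?n j k)
     - (k/a) * (\<Sum>j\<le>m. T a q m j (k*q))
     = (\<Sum>j<?n. (1-k*q^?n) * T a q ?n j (k*q) - (1-k*q^(2*?n)) * T a q ?n j k - (k/a) * T a q m j (k*q))
       + ((1-k*q^?n) * T a q ?n ?n (k*q) - (1-k*q^(2*?n)) * T a q ?n ?n k)"
  proof -
    have e: "(\<Sum>j<?n. (1-k*q^?n) * T a q ?n j (k*q) - (1-k*q^(2*?n)) * T a q ?n j k - (k/a) * T a q m j (k*q))
      = (1-k*q^?n) * (\<Sum>j<?n. T a q ?n j (k*q)) - (1-k*q^(2*?n)) * (\<Sum>j<?n. T a q ?n j k) - (k/a) * (\<Sum>j<?n. T a q m j (k*q))"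
      by (simp only: sum_subtractf sum_distrib_left)
    have r: "\<And>c1 c2 c3 SA SB SC a1 b1::complex. c1*(SA + a1) - c2*(SB + b1) - c3*SC = (c1*SA - c2*SB - c3*SC) + (c1*a1 - c2*b1)"
      by (simp add: algebra_simps)
    show ?thesis unfolding e unfolding lessThan_Suc_atMost[symmetric] sum.lessThan_Suc by (rule r)
  qed
  also have "(\<Sum>j<?n. (1-k*q^?n) * T a q ?n j (k*q) - (1-k*q^(2*?n)) * T a q ?n j k - (k/a) * T a q m j (k*q))
      = (\<Sum>j<?n. G a q ?n (Suc j) k - G a q ?n j k)"
  proof (rule sum.cong)
    fix j assume "j \<in> {..<?n}"
    then show "(1-k*q^?n) * T a q ?n j (k*q) - (1-k*q^(2*?n)) * T a q ?n j k - (k/a) * T a q m j (k*q) = G a q ?n (Suc j) k - G a q ?n j k"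
      by (intro TG_rec[OF nq assms(2)]) auto
  qed simp
  also have "... = G a q ?n ?n k - G a q ?n 0 k" by (rule sum_lessThan_telescope)
  finally show ?thesis using T_top[OF nq, of k ?n a] by (simp add: G_0)
qed

lemma beta_T: "beta17 a k q n = qpoch k q n * (\<Sum>j\<le>n. T a q n j k)"
  unfolding beta17_def T_def ..

lemma beta_rec:
  assumes nq: "\<And>m. qpoch q q m \<noteq> 0" and "a \<noteq> 0"
  shows "(1-k) * beta17 a (k*q) q (Suc m) = (1-k*q^(2*Suc m)) * beta17 a k q (Suc m) + (1-k)*(k/a) * beta17 a (k*q) q m"
proof -
  have h1: "(1-k) * qpoch (k*q) q (Suc m) = qpoch k q (Suc m) * (1 - k*q^Suc m)"
    using qp_shift[of k q "Suc m", symmetric] qp_Suc[of k q "Suc m"] by simp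
  have h2: "(1-k) * qpoch (k*q) q m = qpoch k q (Suc m)"
    using qp_shift[of k q m] by simp
  have "(1-k) * beta17 a (k*q) q (Suc m) - ((1-k*q^(2*Suc m)) * beta17 a k q (Suc m) + (1-k)*(k/a) * beta17 a (k*q) q m)
     = qpoch k q (Suc m) * ((1-k*q^Suc m) * (\<Sum>j\<le>Suc m. T a q (Suc m) j (k*q)) - (1-k*q^(2*Suc m)) * (\<Sum>j\<le>Suc m. T a q (Suc m) j k)
     - (k/a) * (\<Sum>j\<le>m. T a q m j (k*q)))"
    unfolding beta_T
  proof -
    have "(1-k) * (qpoch (k*q) q (Suc m) * (\<Sum>j\<le>Suc m. T a q (Suc m) j (k*q))) = qpoch k q (Suc m) * (1 - k*q^Suc m) * (\<Sum>j\<le>Suc m. T a q (Suc m) j (k*q))"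
      using h1 by (metis mult.assoc)
    moreover have "(1-k)*(k/a) * (qpoch (k*q) q m * (\<Sum>j\<le>m. T a q m j (k*q))) = qpoch k q (Suc m) * (k/a) * (\<Sum>j\<le>m. T a q m j (k*q))"
      using h2 by (metis mult.assoc mult.commute)
    moreover have r2: "\<And>Q c1 c2 c3 S1 S2 S0::complex. Q*c1*S1 - (c2*(Q*S2) + Q*c3*S0) = Q*(c1*S1 - c2*S2 - c3*S0)"
      by (simp add: algebra_simps)
    ultimately show "(1-k) * (qpoch (k*q) q (Suc m) * (\<Sum>j\<le>Suc m. T a q (Suc m) j (k*q))) - ((1-k*q^(2*Suc m)) * (qpoch k q (Suc m) * (\<Sum>j\<le>Suc m. T a q (Suc m) j k)) + (1-k)*(k/a) * (qpoch (k*q) q m * (\<Sum>j\<le>m. T a q m j (k*q))))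
     = qpoch k q (Suc m) * ((1-k*q^Suc m) * (\<Sum>j\<le>Suc m. T a q (Suc m) j (k*q)) - (1-k*q^(2*Suc m)) * (\<Sum>j\<le>Suc m. T a q (Suc m) j k)
     - (k/a) * (\<Sum>j\<le>m. T a q m j (k*q)))"
      by (simp only: \<open>(1-k) * (qpoch (k*q) q (Suc m) * _) = _\<close> \<open>(1-k)*(k/a) * (qpoch (k*q) q m * _) = _\<close>)
  qed
  also have "... = 0" using S_rec[OF nq assms(2)] by simp
  finally show ?thesis by simp
qed

definition W :: "complex \<Rightarrow> complex \<Rightarrow> (nat \<Rightarrow> complex) \<Rightarrow> nat \<Rightarrow> complex \<Rightarrow> complex" where
  "W a q \<alpha> n k = (\<Sum>j\<le>n. K a q n j k * \<alpha> j)"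

lemma W_rec:
  assumes nq: "\<And>m. qpoch q q m \<noteq> 0" and naq: "\<And>m. qpoch (a * q) q m \<noteq> 0" and "a \<noteq> 0"
  shows "(1-k) * W a q \<alpha> (Suc m) (k*q) = (1-k*q^(2*Suc m)) * W a q \<alpha> (Suc m) k + (1-k)*(k/a) * W a q \<alpha> m (k*q)"
proof -
  let ?c2 = "1-k*q^(2*Suc m)" and ?c3 = "(1-k)*(k/a)"
  have "(1-k) * W a q \<alpha> (Suc m) (k*q) = (\<Sum>j<Suc m. ((1-k) * K a q (Suc m) j (k*q)) * \<alpha> j) + (1-k) * K a q (Suc m) (Suc m) (k*q) * \<alpha> (Suc m)"
    unfolding W_def lessThan_Suc_atMost[symmetric] sum.lessThan_Suc by (simp add: sum_distrib_left algebra_simps)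
  also have "(\<Sum>j<Suc m. ((1-k) * K a q (Suc m) j (k*q)) * \<alpha> j) = (\<Sum>j<Suc m. ?c2 * (K a q (Suc m) j k * \<alpha> j) + ?c3 * (K a q m j (k*q) * \<alpha> j))"
  proof (rule sum.cong)
    fix j assume "j \<in> {..<Suc m}"
    then have h: "(1-k) * K a q (Suc m) j (k*q) = ?c2 * K a q (Suc m) j k + ?c3 * K a q m j (k*q)"
      using K_rec[OF nq naq assms(3), of j m k] by auto
    show "((1-k) * K a q (Suc m) j (k*q)) * \<alpha> j = ?c2 * (K a q (Suc m) j k * \<alpha> j) + ?c3 * (K a q m j (k*q) * \<alpha> j)"
      unfolding h distrib_right mult.assoc ..
  qed simp
  also have "... = ?c2 * (\<Sum>j<Suc m. K a q (Suc m) j k * \<alpha> j) + ?c3 * (\<Sum>j<Suc m. K a q m j (k*q) * \<alpha> j)"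
    by (simp only: sum.distrib sum_distrib_left)
  also have "(1-k) * K a q (Suc m) (Suc m) (k*q) * \<alpha> (Suc m) = ?c2 * (K a q (Suc m) (Suc m) k * \<alpha> (Suc m))"
    using K_top[OF naq, of k "Suc m"] by simp
  finally show ?thesis
    unfolding W_def lessThan_Suc_atMost[symmetric] sum.lessThan_Suc
    by (simp add: distrib_left)
qed



lemma exp_eq: "n * (3 * n - 1) div 2 = (n choose 2) + n * n"
proof -
  have h: "2 * (n choose 2) = n * (n - 1)"
  proof (induction n)
    case 0 then show ?case by simp
  next
    case (Suc n)
    have "Suc n choose 2 = (n choose 2) + n" by (simp add: numeral_2_eq_2)
    then show ?case using Suc.IH by (cases n) (simp_all add: algebra_simps)
  qed
  have "n * (3 * n - 1) = n * (n - 1) + 2 * (n * n)" by (cases n) (simp_all add: algebra_simps)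
  then have "n * (3 * n - 1) = 2 * ((n choose 2) + n * n)" using h by simp
  then show ?thesis by simp
qed

lemma base_a:
  assumes nq: "\<And>m. qpoch q q m \<noteq> 0" and naq: "\<And>m. qpoch (a * q) q m \<noteq> 0" and "a \<noteq> 0" "a \<noteq> 1"
  shows "W a q (alpha17 a k0 q) n a = beta17 a a q n"
proof -
  have z1: "(\<Sum>j<n. K a q n j a * alpha17 a k0 q j) = 0"
  proof (rule sum.neutral, rule ballI)
    fix j assume "j \<in> {..<n}"
    then have "n - j = Suc (n - j - 1)" by auto
    then have "qpoch (a/a) q (n - j) = 0" using \<open>a\<noteq>0\<close> by (simp add: qp_one)
    then show "K a q n j a * alpha17 a k0 q j = 0" unfolding K_def by simp
  qed
  have z2: "(\<Sum>j<n. T a q n j a) = 0"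
  proof (rule sum.neutral, rule ballI)
    fix j assume "j \<in> {..<n}"
    then have "n - j = Suc (n - j - 1)" by auto
    then have "qpoch (a/a) q (n - j) = 0" using \<open>a\<noteq>0\<close> by (simp add: qp_one)
    then show "T a q n j a = 0" unfolding T_def by simp
  qed
  have Wa: "W a q (alpha17 a k0 q) n a = K a q n n a * alpha17 a k0 q n"
    unfolding W_def lessThan_Suc_atMost[symmetric] sum.lessThan_Suc z1 by simp
  have Ba: "beta17 a a q n = qpoch a q n * T a q n n a"
    unfolding beta_T lessThan_Suc_atMost[symmetric] sum.lessThan_Suc z2 by simp
  define X where "X = (-1) ^ n * a ^ n * q ^ ((n choose 2) + n * n)"
  have key: "qpoch a q (n+n) * (1 - a*q^(n+n)) = (1-a) * qpoch (a*q) q (n+n)"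
    using qp_Suc[of a q "n+n"] qp_shift[of a q "n+n"] by simp
  have Kn: "K a q n n a = qpoch a q (n+n) / qpoch (a*q) q (n+n)" unfolding K_def by simp
  have al: "alpha17 a k0 q n = X * (1 - a*q^(n+n)) * qpoch a q n / ((1-a) * qpoch q q n)"
    unfolding alpha17_def X_def exp_eq mult_2 ..
  have Tn: "T a q n n a = X / qpoch q q n" unfolding T_def X_def by simp
  have nz: "qpoch (a*q) q (n+n) \<noteq> 0" "1 - a \<noteq> 0" "qpoch q q n \<noteq> 0" using nq naq assms(4) by auto
  have "K a q n n a * alpha17 a k0 q n = (qpoch a q (n+n) * (1 - a*q^(n+n))) * X * qpoch a q n / (qpoch (a*q) q (n+n) * (1-a) * qpoch q q n)"
    unfolding Kn al by (simp add: field_simps)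
  also have "... = qpoch a q n * T a q n n a" unfolding key Tn using nz by (simp add: field_simps)
  finally show ?thesis unfolding Wa Ba .
qed

lemma pf_W: "polyfun (W a q \<alpha> n)"
proof -
  have e: "W a q \<alpha> n = (\<lambda>k. \<Sum>j\<le>n. qpoch (k / a) q (n - j) * qpoch k q (n + j) / (qpoch q q (n - j) * qpoch (a * q) q (n + j)) * \<alpha> j)"
    unfolding W_def K_def by auto
  show ?thesis unfolding e by (intro pf_sum pf_mult pf_div pf_qp1 pf_qp2 pf_const)
qed

lemma pf_beta: "polyfun (\<lambda>k. beta17 a k q n)"
  unfolding beta17_def by (intro pf_sum pf_mult pf_div pf_qp1 pf_qp2 pf_const pf_pow pf_id)

lemma uniq:
  fixes D :: "complex \<Rightarrow> complex"
  assumes pD: "polyfun D" and eq: "\<And>k. (1-k) * D (k*q) = (1 - k*q^N) * D k" and "N > 0"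
    and Da: "D a = 0" and "a \<noteq> 0" "a \<noteq> 1"
    and nq: "\<And>m. qpoch q q m \<noteq> 0" and naq: "\<And>m. qpoch (a * q) q m \<noteq> 0"
  shows "D k = 0"
proof (cases "q = 0")
  case True
  have e: "\<And>k. (1-k) * D 0 = D k" using eq \<open>N>0\<close> True by simp
  have "D 0 = 0" using e[of a] Da \<open>a\<noteq>1\<close> by simp
  then show ?thesis using e[of k] by simp
next
  case False
  have z: "D (a*q^i) = 0" for i
  proof (induction i)
    case 0 then show ?case using Da by simp
  next
    case (Suc i)
    have ne: "1 - a*q^i \<noteq> 0"
    proof (cases i)
      case 0 then show ?thesis using \<open>a\<noteq>1\<close> by simp
    next
      case (Suc i')
      then show ?thesis using naq[of "Suc i'"] unfolding qp_Suc by (auto simp: algebra_simps)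
    qed
    have "(1 - a*q^i) * D (a*q^i*q) = 0" using eq[of "a*q^i"] Suc.IH by simp
    then show ?case using ne by (simp add: mult_ac)
  qed
  have qne: "q^(Suc d) \<noteq> 1" for d using nq[of "Suc d"] unfolding qp_Suc by auto
  have inj: "inj (\<lambda>i::nat. a*q^i)"
  proof (rule injI)
    have aux: "a*q^i = a*q^j \<Longrightarrow> i < j \<Longrightarrow> False" for i j
    proof -
      assume h: "a*q^i = a*q^j" "i < j"
      then obtain d where j: "j = i + Suc d" by (metis less_iff_Suc_add add_Suc_right)
      have "q^i * 1 = q^i * q^(Suc d)" using h \<open>a\<noteq>0\<close> unfolding j power_add by simp
      then have "q^(Suc d) = 1" using False by simp
      then show False using qne by blast
    qed
    fix i j :: nat assume "a*q^i = a*q^j"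
    then show "i = j" using aux[of i j] aux[of j i] by (metis linorder_neqE_nat)
  qed
  obtain p where p: "\<And>x. D x = poly p x" using pD unfolding polyfun_def by blast
  have "p = 0"
  proof (rule ccontr)
    assume "p \<noteq> 0"
    then have "finite {x. poly p x = 0}" by (rule poly_roots_finite)
    moreover have "range (\<lambda>i::nat. a*q^i) \<subseteq> {x. poly p x = 0}" using z p by auto
    ultimately have "finite (range (\<lambda>i::nat. a*q^i))" by (rule finite_subset[rotated])
    then show False using inj by (simp add: finite_image_iff)
  qed
  then show ?thesis using p by simp
qed

theorem mainTheorem17:
  fixes a k q :: complex
  assumes "a \<noteq> 0" and "a \<noteq> 1"
    and "\<And>m. qpoch q q m \<noteq> 0"
    and "\<And>m. qpoch (a * q) q m \<noteq> 0"
  shows "WP_Bailey_pair a k q (alpha17 a k q) (beta17 a k q)"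
proof -
  let ?\<alpha> = "alpha17 a k q"
  have main: "\<forall>k'. W a q ?\<alpha> n k' = beta17 a k' q n" for n
  proof (induction n)
    case 0
    show ?case using assms(2) by (simp add: W_def K_def beta17_def alpha17_def numeral_2_eq_2)
  next
    case (Suc m)
    define D where "D = (\<lambda>k'. W a q ?\<alpha> (Suc m) k' - beta17 a k' q (Suc m))"
    have pD: "polyfun D" unfolding D_def by (intro pf_diff pf_W pf_beta)
    have eq: "(1-k') * D (k'*q) = (1 - k'*q^(2*Suc m)) * D k'" for k'
      unfolding D_def using W_rec[OF assms(3) assms(4) assms(1), of k' ?\<alpha> m]
        beta_rec[OF assms(3) assms(1), of k' m] Suc.IH[rule_format, of "k'*q"]
      by (simp add: algebra_simps)
    have Da: "D a = 0" unfolding D_def using base_a[OF assms(3) assms(4) assms(1) assms(2)] by simp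
    have "D k' = 0" for k'
      by (rule uniq[OF pD eq _ Da assms(1) assms(2) assms(3) assms(4)]) simp
    then show ?case unfolding D_def by simp
  qed
  have a0: "?\<alpha> 0 = 1" using assms(2) by (simp add: alpha17_def)
  show ?thesis unfolding WP_Bailey_pair_def
    using a0 main unfolding W_def K_def by simp
qed

end
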